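(* Let $n\ge 1$ and $0\leq k\leq \lfloor (n-1)/2\rfloor$. Let $H_k$ be the graph with vertex set $\{u_1,\dots,u_n,v_1,\dots,v_n\}$ whose edges are: $u_iv_i$ for all $1\le i\le n$; for each $1\le t\le k$, the edges $u_{2t-1}u_{2t}$ and $v_{2t-1}v_{2t}$; and for every other pair $i<j$ (i.e. $\{i,j\}\neq\{2t-1,2t\}$ for all $t\le k$), the edges $u_iv_j$ and $v_iu_j$. Then $f(H_k)=n-k-1$. In particular, for $k=\lfloor (n-1)/2\rfloor$, $f(H_k)=\lfloor n/2\rfloor$, while $F(H_k)=n-1$.
   Context: All graphs are finite and simple. For a perfect matching $M$ of $G$, a forcing set of $M$ is a subset $S\subseteq M$ contained in no other perfect matching of $G$; $f(G,M)$ is the minimum size of a forcing set of $M$. $f(G)$ and $F(G)$ are the minimum and maximum of $f(G,M)$ over all perfect matchings $M$ of $G$. *)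

theory Defs
  imports Main
begin

text \<open>A finite simple graph is given by a vertex set V and an edge set E of
two-element subsets of V.\<close>

definition perfect_matching :: "'a set \<Rightarrow> 'a set set \<Rightarrow> 'a set set \<Rightarrow> bool" where
  "perfect_matching V E M \<longleftrightarrow> M \<subseteq> E \<and> (\<forall>x\<in>V. \<exists>!e. e \<in> M \<and> x \<in> e)"

definition forcing_set :: "'a set \<Rightarrow> 'a set set \<Rightarrow> 'a set set \<Rightarrow> 'a set set \<Rightarrow> bool" where
  "forcing_set V E M S \<longleftrightarrow> S \<subseteq> M \<and>
     (\<forall>M'. perfect_matching V E M' \<and> S \<subseteq> M' \<longrightarrow> M' = M)"

definition forcing_number :: "'a set \<Rightarrow> 'a set set \<Rightarrow> 'a set set \<Rightarrow> nat" where
  "forcing_number V E M = (LEAST c. \<exists>S. forcing_set V E M S \<and> card S = c)"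

text \<open>f(G) and F(G): minimum and maximum forcing numbers over all perfect matchings.\<close>
definition min_forcing_number :: "'a set \<Rightarrow> 'a set set \<Rightarrow> nat" where
  "min_forcing_number V E = Min {forcing_number V E M | M. perfect_matching V E M}"

definition max_forcing_number :: "'a set \<Rightarrow> 'a set set \<Rightarrow> nat" where
  "max_forcing_number V E = Max {forcing_number V E M | M. perfect_matching V E M}"

text \<open>The graph H_k on vertices u_1..u_n, v_1..v_n; u_i is (False, i), v_i is (True, i).\<close>
definition H_verts :: "nat \<Rightarrow> (bool \<times> nat) set" where
  "H_verts n = UNIV \<times> {1..n}"

definition H_paired :: "nat \<Rightarrow> nat \<Rightarrow> nat \<Rightarrow> bool" where
  "H_paired k i j \<longleftrightarrow> (\<exists>t. 1 \<le> t \<and> t \<le> k \<and> i = 2*t - 1 \<and> j = 2*t)"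

definition H_edges :: "nat \<Rightarrow> nat \<Rightarrow> (bool \<times> nat) set set" where
  "H_edges n k =
     {{(False, i), (True, i)} | i. 1 \<le> i \<and> i \<le> n}
   \<union> {{(False, 2*t - 1), (False, 2*t)} | t. 1 \<le> t \<and> t \<le> k}
   \<union> {{(True, 2*t - 1), (True, 2*t)} | t. 1 \<le> t \<and> t \<le> k}
   \<union> {{(False, i), (True, j)} | i j. 1 \<le> i \<and> i < j \<and> j \<le> n \<and> \<not> H_paired k i j}
   \<union> {{(True, i), (False, j)} | i j. 1 \<le> i \<and> i < j \<and> j \<le> n \<and> \<not> H_paired k i j}"

end

theory Submission
  imports Defs
begin


definition good :: "'a set \<Rightarrow> 'a set set \<Rightarrow> bool" where
  "good V E \<longleftrightarrow> (\<forall>e\<in>E. \<exists>x y. e = {x,y} \<and> x \<noteq> y \<and> x \<in> V \<and> y \<in> V)"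

lemma pm_unique:
  assumes "perfect_matching V E M" "e \<in> M" "f \<in> M" "z \<in> e" "z \<in> f" "z \<in> V"
  shows "e = f"
proof -
  have "\<exists>!g. g \<in> M \<and> z \<in> g" using assms(1,6) unfolding perfect_matching_def by simp
  then show ?thesis using assms(2-5) by (metis)
qed

lemma pm_edge:
  assumes "perfect_matching V E M" "good V E" "e \<in> M"
  obtains x y where "e = {x,y}" "x \<noteq> y" "x \<in> V" "y \<in> V"
proof -
  have "e \<in> E" using assms(1,3) unfolding perfect_matching_def by auto
  then show ?thesis using assms(2) that unfolding good_def by metis
qed

lemma pm_cover:
  assumes "perfect_matching V E M" "z \<in> V"
  obtains h where "h \<in> M" "z \<in> h"
  using assms unfolding perfect_matching_def by metis

lemma pm_sub:
  assumes "perfect_matching V E M" "perfect_matching V E M'" "good V E" "M \<subseteq> M'"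
  shows "M' = M"
proof
  show "M' \<subseteq> M"
  proof
    fix g assume g: "g \<in> M'"
    obtain x y where "g = {x,y}" "x \<in> V" using pm_edge[OF assms(2,3) g] by metis
    then have x: "x \<in> g" "x \<in> V" by auto
    obtain h where h: "h \<in> M" "x \<in> h" using pm_cover[OF assms(1) x(2)] by metis
    have "h \<in> M'" using h(1) assms(4) by blast
    then have "g = h" using pm_unique[OF assms(2) g _ x(1) h(2) x(2)] by simp
    then show "g \<in> M" using h(1) by simp
  qed
next
  show "M \<subseteq> M'" by (rule assms(4))
qed

lemma pm_self_forcing:
  assumes "perfect_matching V E M" "good V E"
  shows "forcing_set V E M M"
  unfolding forcing_set_def
proof (intro conjI allI impI)
  fix M' assume "perfect_matching V E M' \<and> M \<subseteq> M'"
  then show "M' = M" using pm_sub[OF assms(1) _ assms(2)] by simp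
qed simp


lemma switch:
  assumes pm: "perfect_matching V E M" and gd: "good V E"
    and ef: "e \<in> M" "f \<in> M" "e \<noteq> f" and e: "e = {x,x'}" and f: "f = {y,y'}"
    and n1: "{x,y} \<in> E" and n2: "{x',y'} \<in> E"
    and S: "S \<subseteq> M - {e,f}" and fs: "forcing_set V E M S"
  shows False
proof -
  obtain a b where "e = {a,b}" "a \<noteq> b" "a \<in> V" "b \<in> V" using pm_edge[OF pm gd ef(1)] by metis
  then have xV: "x \<in> V" "x' \<in> V" "x \<noteq> x'" using e by (auto simp: doubleton_eq_iff)
  obtain c d where "f = {c,d}" "c \<noteq> d" "c \<in> V" "d \<in> V" using pm_edge[OF pm gd ef(2)] by metis
  then have yV: "y \<in> V" "y' \<in> V" "y \<noteq> y'" using f by (auto simp: doubleton_eq_iff)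
  have dis: "x \<noteq> y" "x \<noteq> y'" "x' \<noteq> y" "x' \<noteq> y'"
    using pm_unique[OF pm ef(1) ef(2)] ef(3) e f xV yV by auto
  define M' where "M' = (M - {e,f}) \<union> {{x,y},{x',y'}}"
  have sub: "M' \<subseteq> E" using pm n1 n2 unfolding M'_def perfect_matching_def by auto
  have cov: "\<exists>!g. g \<in> M' \<and> z \<in> g" if z: "z \<in> V" for z
  proof (cases "z \<in> {x,x',y,y'}")
    case True
    then obtain g where g: "g \<in> {{x,y},{x',y'}}" "z \<in> g" by auto
    show ?thesis
    proof (rule ex1I[of _ g])
      show "g \<in> M' \<and> z \<in> g" using g unfolding M'_def by auto
    next
      fix g' assume g': "g' \<in> M' \<and> z \<in> g'"
      show "g' = g"
      proof (cases "g' \<in> {{x,y},{x',y'}}")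
        case True
        then show ?thesis using g g' dis xV yV by auto
      next
        case False
        then have "g' \<in> M" "g' \<noteq> e" "g' \<noteq> f" using g' unfolding M'_def by auto
        moreover have "z \<in> e \<or> z \<in> f" using \<open>z \<in> {x,x',y,y'}\<close> e f by auto
        ultimately show ?thesis using pm_unique[OF pm \<open>g' \<in> M\<close> ef(1) _ _ z] pm_unique[OF pm \<open>g' \<in> M\<close> ef(2) _ _ z] g' by blast
      qed
    qed
  next
    case False
    obtain h where h: "h \<in> M" "z \<in> h" using pm z unfolding perfect_matching_def by blast
    have "h \<noteq> e" "h \<noteq> f" using h False e f by auto
    then have hM': "h \<in> M'" unfolding M'_def using h by auto
    show ?thesis
    proof (rule ex1I[of _ h])
      show "h \<in> M' \<and> z \<in> h" using hM' h by auto
    next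
      fix g' assume g': "g' \<in> M' \<and> z \<in> g'"
      then have "g' \<in> M" using False unfolding M'_def by auto
      then show "g' = h" using pm_unique[OF pm _ h(1) _ h(2) z] g' by blast
    qed
  qed
  have pm': "perfect_matching V E M'" unfolding perfect_matching_def using sub cov by blast
  have "S \<subseteq> M'" using S unfolding M'_def by auto
  then have "M' = M" using fs pm' unfolding forcing_set_def by blast
  moreover have "e \<notin> M'"
  proof -
    have "e \<noteq> {x,y}" using e dis xV by (auto simp: doubleton_eq_iff)
    moreover have "e \<noteq> {x',y'}" using e dis xV by (auto simp: doubleton_eq_iff)
    ultimately show ?thesis unfolding M'_def by auto
  qed
  ultimately show False using ef(1) by simp
qed


lemma pm_card:
  assumes pm: "perfect_matching V E M" and gd: "good V E" and fin: "finite V"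
  shows "card V = 2 * card M" "finite M"
proof -
  have MP: "M \<subseteq> Pow V"
  proof
    fix g assume "g \<in> M" then show "g \<in> Pow V" using pm_edge[OF pm gd] by (metis PowI empty_subsetI insert_subset)
  qed
  show finM: "finite M" using finite_subset[OF MP] fin by simp
  have U: "\<Union>M = V"
  proof
    show "\<Union>M \<subseteq> V" using MP by auto
    show "V \<subseteq> \<Union>M" using pm unfolding perfect_matching_def by blast
  qed
  have "pairwise disjnt M"
  proof (rule pairwiseI)
    fix a b assume ab: "a \<in> M" "b \<in> M" "a \<noteq> b"
    show "disjnt a b" unfolding disjnt_def
    proof (rule ccontr)
      assume "a \<inter> b \<noteq> {}"
      then obtain z where "z \<in> a" "z \<in> b" by blast
      moreover have "z \<in> V" using MP ab(1) \<open>z \<in> a\<close> by blast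
      ultimately show False using pm_unique[OF pm ab(1,2)] ab(3) by blast
    qed
  qed
  moreover have "\<And>A. A \<in> M \<Longrightarrow> finite A" using MP fin by (meson PowD finite_subset subsetD)
  ultimately have "card (\<Union>M) = sum card M" by (rule card_Union_disjoint)
  also have "\<dots> = sum (\<lambda>_. 2) M"
  proof (rule sum.cong)
    fix g assume "g \<in> M"
    then obtain x y where "g = {x,y}" "x \<noteq> y" using pm_edge[OF pm gd] by metis
    then show "card g = 2" by simp
  qed simp
  finally show "card V = 2 * card M" unfolding U by simp
qed


lemma inv_pm:
  assumes "\<And>x. x \<in> V \<Longrightarrow> \<sigma> x \<in> V \<and> \<sigma> x \<noteq> x \<and> \<sigma> (\<sigma> x) = x \<and> {x, \<sigma> x} \<in> E"
  shows "perfect_matching V E ((\<lambda>x. {x, \<sigma> x}) ` V)"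
  unfolding perfect_matching_def
proof (intro conjI ballI)
  show "(\<lambda>x. {x, \<sigma> x}) ` V \<subseteq> E" using assms by auto
next
  fix x assume x: "x \<in> V"
  show "\<exists>!e. e \<in> (\<lambda>x. {x, \<sigma> x}) ` V \<and> x \<in> e"
  proof (rule ex1I[of _ "{x, \<sigma> x}"])
    show "{x, \<sigma> x} \<in> (\<lambda>x. {x, \<sigma> x}) ` V \<and> x \<in> {x, \<sigma> x}" using x by auto
  next
    fix e assume e: "e \<in> (\<lambda>x. {x, \<sigma> x}) ` V \<and> x \<in> e"
    then obtain y where y: "y \<in> V" "e = {y, \<sigma> y}" by auto
    then have "x = y \<or> x = \<sigma> y" using e by auto
    then show "e = {x, \<sigma> x}"
    proof
      assume "x = y" then show ?thesis using y by simp
    next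
      assume "x = \<sigma> y" then have "\<sigma> x = y" using assms[OF y(1)] by simp
      then show ?thesis using y \<open>x = \<sigma> y\<close> by auto
    qed
  qed
qed

lemma drop_one_forcing:
  assumes pm: "perfect_matching V E M" and gd: "good V E" and eM: "e \<in> M"
  shows "forcing_set V E M (M - {e})"
  unfolding forcing_set_def
proof (intro conjI allI impI)
  show "M - {e} \<subseteq> M" by auto
  fix M' assume M': "perfect_matching V E M' \<and> M - {e} \<subseteq> M'"
  then have pm': "perfect_matching V E M'" and sub: "M - {e} \<subseteq> M'" by auto
  obtain x y where xy: "e = {x,y}" "x \<noteq> y" "x \<in> V" "y \<in> V" using pm_edge[OF pm gd eM] by metis
  obtain g where g: "g \<in> M'" "x \<in> g" using pm_cover[OF pm' xy(3)] by metis
  obtain a b where ab: "g = {a,b}" "a \<noteq> b" "a \<in> V" "b \<in> V" using pm_edge[OF pm' gd g(1)] by metis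
  obtain z where z: "g = {x,z}" "z \<noteq> x" "z \<in> V" using ab g(2) by (auto simp: doubleton_eq_iff)
  obtain h where h: "h \<in> M" "z \<in> h" using pm_cover[OF pm z(3)] by metis
  have "h = e"
  proof (rule ccontr)
    assume "h \<noteq> e"
    then have "h \<in> M'" using h sub by auto
    then have "g = h" using pm_unique[OF pm' g(1) _ _ h(2) z(3)] z(1) by auto
    then have "g = e" using pm_unique[OF pm h(1) eM _ _ xy(3)] g(2) xy(1) by auto
    then show False using \<open>h \<noteq> e\<close> \<open>g = h\<close> by simp
  qed
  then have "z = y" using h(2) z(2) xy(1) by auto
  then have "e \<in> M'" using g(1) z(1) xy(1) by simp
  then have "M \<subseteq> M'" using sub by auto
  then show "M' = M" using pm_sub[OF pm pm' gd] by simp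
qed

lemma fn_le: "forcing_set V E M S \<Longrightarrow> forcing_number V E M \<le> card S"
  unfolding forcing_number_def by (rule Least_le) blast

lemma fn_ge:
  assumes "forcing_set V E M S0" "\<And>S. forcing_set V E M S \<Longrightarrow> c \<le> card S"
  shows "c \<le> forcing_number V E M"
proof -
  have "\<exists>S. forcing_set V E M S \<and> card S = forcing_number V E M"
    unfolding forcing_number_def by (rule LeastI_ex) (use assms(1) in blast)
  then show ?thesis using assms(2) by metis
qed



definition grp :: "nat \<Rightarrow> nat \<Rightarrow> nat" where
  "grp k i = (if i \<le> 2*k then (i+1) div 2 else i)"

definition adj :: "nat \<Rightarrow> nat \<Rightarrow> bool\<times>nat \<Rightarrow> bool\<times>nat \<Rightarrow> bool" where
  "adj n k x y \<longleftrightarrow> snd x \<in> {1..n} \<and> snd y \<in> {1..n} \<and>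
     (if fst x = fst y then snd x \<noteq> snd y \<and> grp k (snd x) = grp k (snd y)
      else (snd x = snd y \<or> grp k (snd x) \<noteq> grp k (snd y)))"

lemma adj_sym: "adj n k x y = adj n k y x"
  unfolding adj_def by auto

lemma grp_eq_le: "grp k i = grp k j \<Longrightarrow> i \<noteq> j \<Longrightarrow> 1 \<le> i \<Longrightarrow> 1 \<le> j \<Longrightarrow> i \<le> 2*k \<and> j \<le> 2*k"
  unfolding grp_def by (auto split: if_splits)

lemma grp_three: "grp k i = grp k j \<Longrightarrow> grp k i = grp k l \<Longrightarrow> i \<noteq> j \<Longrightarrow> i \<noteq> l \<Longrightarrow> j \<noteq> l
   \<Longrightarrow> 1 \<le> i \<Longrightarrow> 1 \<le> j \<Longrightarrow> 1 \<le> l \<Longrightarrow> False"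
proof -
  assume a: "grp k i = grp k j" "grp k i = grp k l" "i \<noteq> j" "i \<noteq> l" "j \<noteq> l" "1 \<le> i" "1 \<le> j" "1 \<le> l"
  then have "i \<le> 2*k" "j \<le> 2*k" "l \<le> 2*k" using grp_eq_le by metis+
  with a show False unfolding grp_def by simp
qed

lemma grp_range: "1 \<le> i \<Longrightarrow> i \<le> 2*k \<Longrightarrow> grp k i \<in> {1..k}"
  unfolding grp_def by auto

lemma paired_grp: "1 \<le> i \<Longrightarrow> i < j \<Longrightarrow> H_paired k i j \<longleftrightarrow> grp k i = grp k j"
proof
  assume "1 \<le> i" "i < j" "H_paired k i j"
  then obtain t where "1 \<le> t" "t \<le> k" "i = 2*t-1" "j = 2*t" unfolding H_paired_def by auto
  then show "grp k i = grp k j" unfolding grp_def by auto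
next
  assume a: "1 \<le> i" "i < j" "grp k i = grp k j"
  then have "i \<le> 2*k" "j \<le> 2*k" using grp_eq_le by (metis less_imp_le_nat nat_neq_iff order.trans)+
  with a have "(i+1) div 2 = (j+1) div 2" unfolding grp_def by simp
  with a have "i = 2*((i+1) div 2) - 1 \<and> j = 2*((i+1) div 2)" by presburger
  moreover have "1 \<le> (i+1) div 2" "(i+1) div 2 \<le> k" using a \<open>i \<le> 2*k\<close> by presburger+
  ultimately show "H_paired k i j" unfolding H_paired_def by blast
qed


lemma edge_form:
  assumes "2*k < n" "e \<in> H_edges n k"
  shows "\<exists>x y. e = {x,y} \<and> x \<noteq> y \<and> adj n k x y"
  using assms(2) unfolding H_edges_def
proof (elim UnE CollectE exE conjE)
  fix i assume "e = {(False, i), (True, i)}" "1 \<le> i" "i \<le> n"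
  then show ?thesis unfolding adj_def by auto
next
  fix t assume "e = {(False, 2*t-1), (False, 2*t)}" "1 \<le> t" "t \<le> k"
  moreover have g: "grp k (2*t-1) = grp k (2*t)" using \<open>1 \<le> t\<close> \<open>t \<le> k\<close> unfolding grp_def by auto
  moreover have "adj n k (False,2*t-1) (False,2*t)" using assms(1) \<open>1 \<le> t\<close> \<open>t \<le> k\<close> g unfolding adj_def by (simp, linarith)
  moreover have "(False,2*t-1) \<noteq> (False,2*t)" using \<open>1 \<le> t\<close> by auto
  ultimately show ?thesis by blast
next
  fix t assume "e = {(True, 2*t-1), (True, 2*t)}" "1 \<le> t" "t \<le> k"
  moreover have g: "grp k (2*t-1) = grp k (2*t)" using \<open>1 \<le> t\<close> \<open>t \<le> k\<close> unfolding grp_def by auto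
  moreover have "adj n k (True,2*t-1) (True,2*t)" using assms(1) \<open>1 \<le> t\<close> \<open>t \<le> k\<close> g unfolding adj_def by (simp, linarith)
  moreover have "(True,2*t-1) \<noteq> (True,2*t)" using \<open>1 \<le> t\<close> by auto
  ultimately show ?thesis by blast
next
  fix i j assume "e = {(False, i), (True, j)}" "1 \<le> i" "i < j" "j \<le> n" "\<not> H_paired k i j"
  note h = this
  have "grp k i \<noteq> grp k j" using h(2,3,5) paired_grp[of i j k] by simp
  then have "adj n k (False,i) (True,j)" using h(2-4) unfolding adj_def by simp
  then show ?thesis using h(1) by blast
next
  fix i j assume "e = {(True, i), (False, j)}" "1 \<le> i" "i < j" "j \<le> n" "\<not> H_paired k i j"
  note h = this
  have "grp k i \<noteq> grp k j" using h(2,3,5) paired_grp[of i j k] by simp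
  then have "adj n k (True,i) (False,j)" using h(2-4) unfolding adj_def by simp
  then show ?thesis using h(1) by blast
qed

lemma edge_intro:
  assumes "x \<noteq> y" "adj n k x y"
  shows "{x,y} \<in> H_edges n k"
proof -
  obtain s i s' j where xy: "x = (s,i)" "y = (s',j)" by (cases x, cases y) auto
  have r: "1 \<le> i" "i \<le> n" "1 \<le> j" "j \<le> n" using assms(2) xy unfolding adj_def by auto
  show ?thesis
  proof (cases "s = s'")
    case True
    then have ij: "i \<noteq> j" "grp k i = grp k j" using assms xy unfolding adj_def by auto
    have "\<exists>t. 1 \<le> t \<and> t \<le> k \<and> {i,j} = {2*t-1, 2*t}"
    proof (cases "i < j")
      case True
      then have "H_paired k i j" using paired_grp[of i j k] ij r by auto
      then show ?thesis unfolding H_paired_def by auto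
    next
      case False
      then have "H_paired k j i" using paired_grp[of j i k] ij r by auto
      then show ?thesis unfolding H_paired_def by auto
    qed
    then obtain t where t: "1 \<le> t" "t \<le> k" "{i,j} = {2*t-1, 2*t}" by blast
    then have "{x,y} = {(s,2*t-1),(s,2*t)}" using xy \<open>s = s'\<close> by (auto simp: doubleton_eq_iff)
    then show ?thesis using t unfolding H_edges_def by (cases s) auto
  next
    case False
    then have ij: "i = j \<or> grp k i \<noteq> grp k j" using assms xy unfolding adj_def by auto
    show ?thesis
    proof (cases "i = j")
      case True
      then have "{x,y} = {(False,i),(True,i)}" using xy False by (cases s) auto
      then show ?thesis using r unfolding H_edges_def by blast
    next
      case ne: False
      then have ng: "grp k i \<noteq> grp k j" using ij by auto
      show ?thesis
      proof (cases "i < j")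
        case True
        then have np: "\<not> H_paired k i j" using paired_grp[of i j k] ng r by auto
        show ?thesis
        proof (cases s)
          case True
          then have "{x,y} = {(True,i),(False,j)}" using xy False by auto
          then show ?thesis using r np \<open>i<j\<close> unfolding H_edges_def by blast
        next
          case f: False
          then have "{x,y} = {(False,i),(True,j)}" using xy False by auto
          then show ?thesis using r np \<open>i<j\<close> unfolding H_edges_def by blast
        qed
      next
        case False
        then have lt: "j < i" using ne by auto
        then have np: "\<not> H_paired k j i" using paired_grp[of j i k] ng r by auto
        show ?thesis
        proof (cases s)
          case True
          then have "{x,y} = {(False,j),(True,i)}" using xy \<open>s \<noteq> s'\<close> by auto
          then show ?thesis using r np lt unfolding H_edges_def by blast
        next
          case f: False
          then have "{x,y} = {(True,j),(False,i)}" using xy \<open>s \<noteq> s'\<close> by auto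
          then show ?thesis using r np lt unfolding H_edges_def by blast
        qed
      qed
    qed
  qed
qed

lemma edge_iff:
  assumes "2*k < n"
  shows "{x,y} \<in> H_edges n k \<longleftrightarrow> x \<noteq> y \<and> adj n k x y"
proof
  assume "{x,y} \<in> H_edges n k"
  then obtain a b where "{x,y} = {a,b}" "a \<noteq> b" "adj n k a b" using edge_form[OF assms] by blast
  then show "x \<noteq> y \<and> adj n k x y" using adj_sym[of n k a b] by (auto simp: doubleton_eq_iff)
qed (use edge_intro in auto)



lemma grp_mem: "grp k i = t \<Longrightarrow> 1 \<le> t \<Longrightarrow> t \<le> k \<Longrightarrow> 1 \<le> i \<Longrightarrow> i = 2*t-1 \<or> i = 2*t"
  unfolding grp_def by (auto split: if_splits)

lemma four_logic:
  assumes "p \<noteq> q" "p \<noteq> r" "p \<noteq> s" "q \<noteq> r" "q \<noteq> s" "r \<noteq> s"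
    and cov: "\<And>x y. x \<in> {p,q,r,s} \<Longrightarrow> y \<in> {p,q,r,s} \<Longrightarrow> x \<noteq> y \<Longrightarrow> R x y \<or> R y x"
    and fnc: "\<And>x y z. x \<in> {p,q,r,s} \<Longrightarrow> y \<in> {p,q,r,s} \<Longrightarrow> z \<in> {p,q,r,s} \<Longrightarrow> R x y \<Longrightarrow> R x z \<Longrightarrow> y = z"
  shows False
proof -
  have c: "R p q \<or> R q p" "R p r \<or> R r p" "R p s \<or> R s p" "R q r \<or> R r q" "R q s \<or> R s q" "R r s \<or> R s r"
    using cov assms(1-6) by auto
  have f: "\<And>x y z. x \<in> {p,q,r,s} \<Longrightarrow> y \<in> {p,q,r,s} \<Longrightarrow> z \<in> {p,q,r,s} \<Longrightarrow> y \<noteq> z \<Longrightarrow> \<not> (R x y \<and> R x z)"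
    using fnc by blast
  have "\<not> (R p q \<and> R p r)" "\<not> (R p q \<and> R p s)" "\<not> (R p r \<and> R p s)"
       "\<not> (R q p \<and> R q r)" "\<not> (R q p \<and> R q s)" "\<not> (R q r \<and> R q s)"
       "\<not> (R r p \<and> R r q)" "\<not> (R r p \<and> R r s)" "\<not> (R r q \<and> R r s)"
       "\<not> (R s p \<and> R s q)" "\<not> (R s p \<and> R s r)" "\<not> (R s q \<and> R s r)"
    using f assms(1-6) by blast+
  with c show False by blast
qed

lemma pairs_bound:
  fixes P :: "(nat \<times> nat) set"
  assumes fin: "finite P" and rng: "\<And>p. p \<in> P \<Longrightarrow> 1 \<le> fst p \<and> 1 \<le> snd p"
    and injf: "inj_on fst P" and injs: "inj_on snd P"
    and cond: "\<And>p q. p \<in> P \<Longrightarrow> q \<in> P \<Longrightarrow> p \<noteq> q \<Longrightarrow>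
        (fst p \<noteq> snd q \<and> grp k (fst p) = grp k (snd q)) \<or> (fst q \<noteq> snd p \<and> grp k (fst q) = grp k (snd p))"
  shows "card P \<le> card (grp k ` {a \<in> fst ` P. a \<le> 2*k}) + 1"
proof -
  define R :: "nat\<times>nat \<Rightarrow> nat\<times>nat \<Rightarrow> bool" where "R p q \<longleftrightarrow> fst p \<noteq> snd q \<and> grp k (fst p) = grp k (snd q)" for p q
  define Q where "Q = grp k ` {a \<in> fst ` P. a \<le> 2*k}"
  have finQ: "finite Q" unfolding Q_def using fin by simp
  have cov: "R p q \<or> R q p" if "p \<in> P" "q \<in> P" "p \<noteq> q" for p q
    using cond[OF that] unfolding R_def by blast
  have fnc: "q = q'" if "p \<in> P" "q \<in> P" "q' \<in> P" "R p q" "R p q'" for p q q'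
  proof -
    have "snd q = snd q'"
    proof (rule ccontr)
      assume "snd q \<noteq> snd q'"
      then show False using grp_three[of k "fst p" "snd q" "snd q'"] that rng unfolding R_def by metis
    qed
    then show ?thesis using injs that(2,3) unfolding inj_on_def by blast
  qed
  have inQ: "grp k (fst p) \<in> Q" if "p \<in> P" "R p q" "q \<in> P" for p q
  proof -
    have "fst p \<le> 2*k" using grp_eq_le[of k "fst p" "snd q"] that rng unfolding R_def by blast
    then show ?thesis unfolding Q_def using that(1) by blast
  qed
  have "card P \<le> 3"
  proof (rule ccontr)
    assume "\<not> card P \<le> 3"
    then have "4 \<le> card P" by simp
    then obtain T where T: "T \<subseteq> P" "card T = 4" "finite T" by (metis obtain_subset_with_card_n)
    then have "T \<noteq> {}" by auto
    then obtain p where p: "p \<in> T" by blast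
    then have "card (T - {p}) = 3" using T by simp
    then obtain q r s where qrs: "T - {p} = {q,r,s}" "q \<noteq> r" "r \<noteq> s" "q \<noteq> s" using card_3_iff[of "T-{p}"] by blast
    then have Teq: "T = {p,q,r,s}" "p \<notin> {q,r,s}" using p by auto
    show False
    proof (rule four_logic[of p q r s R])
      show "\<And>x y. x \<in> {p, q, r, s} \<Longrightarrow> y \<in> {p, q, r, s} \<Longrightarrow> x \<noteq> y \<Longrightarrow> R x y \<or> R y x"
        using cov T(1) Teq(1) by blast
      show "\<And>x y z. x \<in> {p, q, r, s} \<Longrightarrow> y \<in> {p, q, r, s} \<Longrightarrow> z \<in> {p, q, r, s} \<Longrightarrow> R x y \<Longrightarrow> R x z \<Longrightarrow> y = z"
        using fnc T(1) Teq(1) by blast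
    qed (use qrs Teq in auto)
  qed
  moreover
  have "card Q \<ge> 1" if c2: "card P = 2"
  proof -
    obtain p q where pq: "P = {p,q}" "p \<noteq> q" using c2 card_2_iff[of P] by blast
    then have "R p q \<or> R q p" using cov by blast
    then have "Q \<noteq> {}" using inQ pq by blast
    then show ?thesis using finQ by (simp add: Suc_le_eq card_gt_0_iff)
  qed
  moreover
  have "card Q \<ge> 2" if c3: "card P = 3"
  proof -
    obtain p q r where pq: "P = {p,q,r}" "p \<noteq> q" "q \<noteq> r" "p \<noteq> r" using c3 card_3_iff[of P] by blast
    have pP: "p \<in> P" "q \<in> P" "r \<in> P" using pq by auto
    have no2: False if "R x y" "R x z" "x \<in> P" "y \<in> P" "z \<in> P" "y \<noteq> z" for x y z
      using fnc[OF that(3,4,5,1,2)] that(6) by simp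
    have op: "R p q \<or> R p r"
    proof (rule ccontr)
      assume "\<not> (R p q \<or> R p r)"
      then have "R q p" "R r p" using cov[OF pP(1,2) pq(2)] cov[OF pP(1,3) pq(4)] by auto
      then show False using cov[OF pP(2,3) pq(3)] no2[OF _ _ pP(2,1,3)] no2[OF _ _ pP(3,1,2)] pq by blast
    qed
    have oq: "R q p \<or> R q r"
    proof (rule ccontr)
      assume "\<not> (R q p \<or> R q r)"
      then have "R p q" "R r q" using cov[OF pP(1,2) pq(2)] cov[OF pP(2,3) pq(3)] by auto
      then show False using cov[OF pP(1,3) pq(4)] no2[OF _ _ pP(1,2,3)] no2[OF _ _ pP(3,2,1)] pq by blast
    qed
    have or: "R r p \<or> R r q"
    proof (rule ccontr)
      assume "\<not> (R r p \<or> R r q)"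
      then have "R p r" "R q r" using cov[OF pP(1,3) pq(4)] cov[OF pP(2,3) pq(3)] by auto
      then show False using cov[OF pP(1,2) pq(2)] no2[OF _ _ pP(1,3,2)] no2[OF _ _ pP(2,3,1)] pq by blast
    qed
    have out: "\<exists>y\<in>P. R x y" if "x \<in> {p,q,r}" for x
      using that op oq or pP by blast
    have g: "grp k (fst p) \<in> Q" "grp k (fst q) \<in> Q" "grp k (fst r) \<in> Q"
      using out inQ pP by blast+
    have d: "fst p \<noteq> fst q" "fst q \<noteq> fst r" "fst p \<noteq> fst r"
      using injf pq unfolding inj_on_def by auto
    have "\<exists>a b. a \<in> Q \<and> b \<in> Q \<and> a \<noteq> b"
    proof (cases "grp k (fst p) = grp k (fst q)")
      case True
      then have "grp k (fst p) \<noteq> grp k (fst r)" using grp_three[of k "fst p" "fst q" "fst r"] d rng pq by auto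
      then show ?thesis using g by blast
    next
      case False then show ?thesis using g by blast
    qed
    then obtain a b where "a \<in> Q" "b \<in> Q" "a \<noteq> b" by blast
    then have "card {a,b} \<le> card Q" using finQ by (intro card_mono) auto
    then show ?thesis using \<open>a \<noteq> b\<close> by simp
  qed
  ultimately show ?thesis unfolding Q_def[symmetric]
    by (cases "card P \<le> 1") (auto simp: le_Suc_eq numeral_3_eq_3)
qed


lemma H_fin: "finite (H_verts n)" unfolding H_verts_def by simp

lemma H_card: "card (H_verts n) = 2 * n" unfolding H_verts_def by (simp add: card_cartesian_product)

lemma adj_V: "adj n k x y \<Longrightarrow> x \<in> H_verts n \<and> y \<in> H_verts n"
  unfolding adj_def H_verts_def by (cases x, cases y) auto

lemma H_good: "2*k < n \<Longrightarrow> good (H_verts n) (H_edges n k)"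
  unfolding good_def using edge_form adj_V by metis

lemma pm_adj:
  assumes "2*k < n" "perfect_matching (H_verts n) (H_edges n k) M" "e \<in> M"
  obtains x y where "e = {x,y}" "x \<noteq> y" "adj n k x y"
proof -
  have "e \<in> H_edges n k" using assms(2,3) unfolding perfect_matching_def by auto
  then show ?thesis using edge_form[OF assms(1)] that by metis
qed

lemma T_bound_side:
  assumes nk: "2*k < n" and pm: "perfect_matching (H_verts n) (H_edges n k) M" and TM: "T \<subseteq> M"
    and nsw: "\<And>e f x x' y y'. e \<in> T \<Longrightarrow> f \<in> T \<Longrightarrow> e \<noteq> f \<Longrightarrow> e = {x,x'} \<Longrightarrow> f = {y,y'}
               \<Longrightarrow> {x,y} \<in> H_edges n k \<Longrightarrow> {x',y'} \<in> H_edges n k \<Longrightarrow> False"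
    and nob: "\<And>i j. {(b,i),(b,j)} \<notin> T"
  shows "card T \<le> k+1"
proof -
  define c where "c = (\<not> b)"
  have bc: "b \<noteq> c" "c \<noteq> b" unfolding c_def by auto
  have gd: "good (H_verts n) (H_edges n k)" using H_good[OF nk] .
  have finM: "finite M" using pm_card(2)[OF pm gd H_fin] .
  have finT: "finite T" using finite_subset[OF TM finM] .
  have eT: "\<exists>x y. e = {x,y} \<and> x \<noteq> y \<and> adj n k x y" if "e \<in> T" for e
    using pm_adj[OF nk pm] that TM by (metis subsetD)
  define W where "W = {e\<in>T. \<exists>i j. e = {(c,i),(c,j)}}"
  define P where "P = {(a,d). {(c,a),(b,d)} \<in> T}"
  define \<phi> where "\<phi> = (\<lambda>(a::nat,d::nat). {(c,a),(b,d)})"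
  have \<phi>W: "\<phi> p \<notin> W" for p
  proof
    assume "\<phi> p \<in> W"
    then obtain i j where "\<phi> p = {(c,i),(c,j)}" unfolding W_def by blast
    then show False using bc unfolding \<phi>_def by (cases p) (auto simp: doubleton_eq_iff)
  qed
  have split: "T - W = \<phi> ` P"
  proof
    show "T - W \<subseteq> \<phi> ` P"
    proof
      fix e assume e: "e \<in> T - W"
      then obtain x y where xy: "e = {x,y}" "x \<noteq> y" "adj n k x y" using eT by blast
      obtain s i t j where st: "x = (s,i)" "y = (t,j)" by (cases x, cases y) auto
      show "e \<in> \<phi> ` P"
      proof (cases "s = t")
        case True
        show ?thesis
        proof (cases "s = b")
          case True
          then show ?thesis using nob[of i j] e xy st \<open>s = t\<close> by auto
        next
          case False
          then have "s = c" unfolding c_def by auto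
          then have "e \<in> W" using e xy st \<open>s = t\<close> unfolding W_def by auto
          then show ?thesis using e by auto
        qed
      next
        case False
        show ?thesis
        proof (cases "s = c")
          case True
          then have "t = b" using False unfolding c_def by auto
          then have "e = \<phi> (i,j)" unfolding \<phi>_def using xy st \<open>s = c\<close> by auto
          moreover have "(i,j) \<in> P" unfolding P_def using e calculation unfolding \<phi>_def by auto
          ultimately show ?thesis by blast
        next
          case False
          then have "s = b" "t = c" using \<open>s \<noteq> t\<close> unfolding c_def by auto
          then have "e = \<phi> (j,i)" unfolding \<phi>_def using xy st by auto
          moreover have "(j,i) \<in> P" unfolding P_def using e calculation unfolding \<phi>_def by auto
          ultimately show ?thesis by blast
        qed
      qed
    qed
  next
    show "\<phi> ` P \<subseteq> T - W"
      using \<phi>W unfolding P_def \<phi>_def by auto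
  qed
  have inj\<phi>: "inj_on \<phi> P"
    unfolding inj_on_def \<phi>_def using bc by (auto simp: doubleton_eq_iff)
  have \<phi>T: "\<phi> p \<in> T" if "p \<in> P" for p using that unfolding P_def \<phi>_def by auto
  have \<phi>E: "\<phi> p \<in> H_edges n k" if "p \<in> P" for p using \<phi>T[OF that] TM pm unfolding perfect_matching_def by auto
  have rngP: "1 \<le> fst p \<and> fst p \<le> n \<and> 1 \<le> snd p \<and> snd p \<le> n" if "p \<in> P" for p
  proof -
    have "adj n k (c, fst p) (b, snd p)" using \<phi>E[OF that] edge_iff[OF nk] unfolding \<phi>_def by (cases p) auto
    then show ?thesis unfolding adj_def by auto
  qed
  have finP: "finite P"
  proof (rule finite_subset)
    show "P \<subseteq> {1..n} \<times> {1..n}" using rngP by force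
  qed simp
  have cardTW: "card (T - W) = card P" using split card_image[OF inj\<phi>] by simp
  have VcV: "(s, i) \<in> H_verts n" if "1 \<le> i" "i \<le> n" for s i using that unfolding H_verts_def by auto
  have injf: "inj_on fst P"
  proof (rule inj_onI)
    fix p q assume pq: "p \<in> P" "q \<in> P" "fst p = fst q"
    have "\<phi> p = \<phi> q"
      using pm_unique[OF pm subsetD[OF TM \<phi>T[OF pq(1)]] subsetD[OF TM \<phi>T[OF pq(2)]], of "(c, fst p)"]
        VcV[of "fst p" c] rngP[OF pq(1)] pq(3) unfolding \<phi>_def by (cases p, cases q) auto
    then show "p = q" using inj\<phi> pq(1,2) unfolding inj_on_def by blast
  qed
  have injs: "inj_on snd P"
  proof (rule inj_onI)
    fix p q assume pq: "p \<in> P" "q \<in> P" "snd p = snd q"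
    have "\<phi> p = \<phi> q"
      using pm_unique[OF pm subsetD[OF TM \<phi>T[OF pq(1)]] subsetD[OF TM \<phi>T[OF pq(2)]], of "(b, snd p)"]
        VcV[of "snd p" b] rngP[OF pq(1)] pq(3) unfolding \<phi>_def by (cases p, cases q) auto
    then show "p = q" using inj\<phi> pq(1,2) unfolding inj_on_def by blast
  qed
  have cond: "(fst p \<noteq> snd q \<and> grp k (fst p) = grp k (snd q)) \<or> (fst q \<noteq> snd p \<and> grp k (fst q) = grp k (snd p))"
    if pq: "p \<in> P" "q \<in> P" "p \<noteq> q" for p q
  proof (rule ccontr)
    assume ncond: "\<not> ?thesis"
    obtain a d a' d' where pd: "p = (a,d)" "q = (a',d')" by (cases p, cases q) auto
    have ne: "\<phi> p \<noteq> \<phi> q" using inj\<phi> pq unfolding inj_on_def by blast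
    have r: "1 \<le> a" "a \<le> n" "1 \<le> d" "d \<le> n" "1 \<le> a'" "a' \<le> n" "1 \<le> d'" "d' \<le> n"
      using rngP[OF pq(1)] rngP[OF pq(2)] pd by auto
    have "adj n k (c,a) (b,d')" using ncond pd r bc unfolding adj_def by auto
    then have e1: "{(c,a),(b,d')} \<in> H_edges n k" using edge_iff[OF nk] bc by auto
    have "adj n k (b,d) (c,a')" using ncond pd r bc unfolding adj_def by auto
    then have e2: "{(b,d),(c,a')} \<in> H_edges n k" using edge_iff[OF nk] bc by auto
    show False
      using nsw[OF \<phi>T[OF pq(1)] \<phi>T[OF pq(2)] ne _ _ e1 e2] pd unfolding \<phi>_def by (auto simp: insert_commute)
  qed
  define Q where "Q = grp k ` {a \<in> fst ` P. a \<le> 2*k}"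
  have PQ: "card P \<le> card Q + 1" unfolding Q_def
    by (rule pairs_bound[OF finP _ injf injs cond]) (use rngP in auto)
  have Qk: "Q \<subseteq> {1..k}" unfolding Q_def using grp_range rngP by force
  have finQ: "finite Q" using finite_subset[OF Qk] by simp
  define \<psi> where "\<psi> = (\<lambda>t::nat. {(c,2*t-1),(c,2*t)})"
  have W\<psi>: "W \<subseteq> \<psi> ` ({1..k} - Q)"
  proof
    fix e assume eW: "e \<in> W"
    then obtain i j where ij: "e = {(c,i),(c,j)}" "e \<in> T" unfolding W_def by blast
    have "{(c,i),(c,j)} \<in> H_edges n k" using ij TM pm unfolding perfect_matching_def by blast
    then have ad: "(c,i) \<noteq> (c,j)" "adj n k (c,i) (c,j)" using edge_iff[OF nk, of "(c,i)" "(c,j)"] by simp_all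
    then have g: "i \<noteq> j" "grp k i = grp k j" "1 \<le> i" "1 \<le> j" "i \<le> n" "j \<le> n" unfolding adj_def by auto
    then have le: "i \<le> 2*k" "j \<le> 2*k" using grp_eq_le[of k i j] by auto
    define t where "t = grp k i"
    have t: "t \<in> {1..k}" using grp_range[OF g(3) le(1)] unfolding t_def .
    have "i = 2*t-1 \<or> i = 2*t" "j = 2*t-1 \<or> j = 2*t"
      using grp_mem[of k i t] grp_mem[of k j t] t g unfolding t_def by simp_all
    then have et: "e = \<psi> t" unfolding \<psi>_def ij(1) using g(1) by (auto simp: insert_commute)
    have "t \<notin> Q"
    proof
      assume "t \<in> Q"
      then obtain a where a: "a \<in> fst ` P" "a \<le> 2*k" "grp k a = t" unfolding Q_def by blast
      then obtain d where ad: "(a,d) \<in> P" by force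
      have "a = 2*t-1 \<or> a = 2*t" using grp_mem[OF a(3)] t rngP[OF ad] by auto
      then have "(c,a) \<in> e" using et unfolding \<psi>_def by auto
      moreover have "(c,a) \<in> \<phi> (a,d)" unfolding \<phi>_def by simp
      moreover have "(c,a) \<in> H_verts n" using rngP[OF ad] VcV by auto
      ultimately have "e = \<phi> (a,d)"
        using pm_unique[OF pm subsetD[OF TM ij(2)] subsetD[OF TM \<phi>T[OF ad]]] by blast
      then show False using eW \<phi>W by metis
    qed
    then show "e \<in> \<psi> ` ({1..k} - Q)" using et t by blast
  qed
  have "card W \<le> card ({1..k} - Q)"
    using card_image_le[of "{1..k} - Q" \<psi>] card_mono[OF _ W\<psi>] by (meson finite_Diff finite_atLeastAtMost finite_imageI le_trans)
  also have "\<dots> = k - card Q" using card_Diff_subset[OF finQ Qk] by simp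
  finally have cW: "card W \<le> k - card Q" .
  have cQ: "card Q \<le> k" using card_mono[OF _ Qk] by simp
  have WT: "W \<subseteq> T" unfolding W_def by auto
  have "card T = card W + card (T - W)"
    using card_Diff_subset[OF finite_subset[OF WT finT] WT] card_mono[OF finT WT] by simp
  then show ?thesis using cW cQ cardTW PQ by linarith
qed


lemma T_bound:
  assumes nk: "2*k < n" and pm: "perfect_matching (H_verts n) (H_edges n k) M" and TM: "T \<subseteq> M"
    and nsw: "\<And>e f x x' y y'. e \<in> T \<Longrightarrow> f \<in> T \<Longrightarrow> e \<noteq> f \<Longrightarrow> e = {x,x'} \<Longrightarrow> f = {y,y'}
               \<Longrightarrow> {x,y} \<in> H_edges n k \<Longrightarrow> {x',y'} \<in> H_edges n k \<Longrightarrow> False"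
  shows "card T \<le> k+1"
proof (cases "\<forall>i j. {(True,i),(True,j)} \<notin> T")
  case True
  show ?thesis by (rule T_bound_side[where b=True, OF nk pm TM], rule nsw, assumption+) (use True in blast)
next
  case False
  then obtain i' j' where e2: "{(True,i'),(True,j')} \<in> T" by blast
  show ?thesis
  proof (cases "\<forall>i j. {(False,i),(False,j)} \<notin> T")
    case True
    show ?thesis by (rule T_bound_side[where b=False, OF nk pm TM], rule nsw, assumption+) (use True in blast)
  next
    case False
    then obtain i j where e1: "{(False,i),(False,j)} \<in> T" by blast
    have E: "T \<subseteq> H_edges n k" using TM pm unfolding perfect_matching_def by blast
    have "(False,i) \<noteq> (False,j) \<and> adj n k (False,i) (False,j)" using e1 E edge_iff[OF nk] by blast
    then have g1: "i \<noteq> j" "grp k i = grp k j" "1 \<le> i" "i \<le> n" "1 \<le> j" "j \<le> n" unfolding adj_def by auto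
    have "(True,i') \<noteq> (True,j') \<and> adj n k (True,i') (True,j')" using e2 E edge_iff[OF nk] by blast
    then have g2: "i' \<noteq> j'" "grp k i' = grp k j'" "1 \<le> i'" "i' \<le> n" "1 \<le> j'" "j' \<le> n" unfolding adj_def by auto
    have ne: "{(False,i),(False,j)} \<noteq> {(True,i'),(True,j')}" by auto
    show ?thesis
    proof (cases "grp k i = grp k i'")
      case True
      have "i' = i \<or> i' = j" using grp_three[of k i j i'] g1 g2 True by auto
      moreover have "j' = i \<or> j' = j" using grp_three[of k i j j'] g1 g2 True by auto
      ultimately have eq: "{(True,i'),(True,j')} = {(True,i),(True,j)}" using g2(1) by auto
      have a1: "{(False,i),(True,i)} \<in> H_edges n k" using edge_iff[OF nk] g1 unfolding adj_def by auto
      have a2: "{(False,j),(True,j)} \<in> H_edges n k" using edge_iff[OF nk] g1 unfolding adj_def by auto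
      show ?thesis using nsw[OF e1 e2 ne _ eq a1 a2] by simp
    next
      case False
      have a1: "{(False,i),(True,i')} \<in> H_edges n k" using edge_iff[OF nk] g1 g2 False unfolding adj_def by auto
      have a2: "{(False,j),(True,j')} \<in> H_edges n k" using edge_iff[OF nk] g1 g2 False unfolding adj_def by auto
      show ?thesis using nsw[OF e1 e2 ne _ _ a1 a2] by simp
    qed
  qed
qed

lemma fn_lower:
  assumes nk: "2*k < n" and pm: "perfect_matching (H_verts n) (H_edges n k) M"
  shows "n - k - 1 \<le> forcing_number (H_verts n) (H_edges n k) M"
proof -
  have gd: "good (H_verts n) (H_edges n k)" using H_good[OF nk] .
  have cM: "card M = n" using pm_card(1)[OF pm gd H_fin] H_card by simp
  have finM: "finite M" using pm_card(2)[OF pm gd H_fin] .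
  show ?thesis
  proof (rule fn_ge[OF pm_self_forcing[OF pm gd]])
    fix S assume S: "forcing_set (H_verts n) (H_edges n k) M S"
    then have SM: "S \<subseteq> M" unfolding forcing_set_def by simp
    have "card (M - S) \<le> k+1"
    proof (rule T_bound[OF nk pm])
      show "M - S \<subseteq> M" by auto
    next
      fix e f x x' y y' assume h: "e \<in> M - S" "f \<in> M - S" "e \<noteq> f" "e = {x,x'}" "f = {y,y'}"
        "{x,y} \<in> H_edges n k" "{x',y'} \<in> H_edges n k"
      show False
        by (rule switch[OF pm gd _ _ h(3,4,5,6,7) _ S]) (use h SM in auto)
    qed
    moreover have "card (M - S) = card M - card S" using card_Diff_subset[OF finite_subset[OF SM finM] SM] .
    moreover have "card S \<le> card M" using card_mono[OF finM SM] .
    ultimately show "n - k - 1 \<le> card S" using cM by linarith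
  qed
qed


definition Mid :: "nat \<Rightarrow> (bool \<times> nat) set set" where
  "Mid n = (\<lambda>x. {x, (\<not> fst x, snd x)}) ` H_verts n"

lemma Mid_pm: "2*k < n \<Longrightarrow> perfect_matching (H_verts n) (H_edges n k) (Mid n)"
  unfolding Mid_def
proof (rule inv_pm)
  fix x assume "2*k < n" "x \<in> H_verts n"
  moreover have "adj n k x (\<not> fst x, snd x)" using calculation(2) unfolding adj_def H_verts_def by auto
  ultimately show "(\<not> fst x, snd x) \<in> H_verts n \<and> (\<not> fst x, snd x) \<noteq> x \<and> (\<not> fst (\<not> fst x, snd x), snd (\<not> fst x, snd x)) = x
        \<and> {x, (\<not> fst x, snd x)} \<in> H_edges n k"
    using edge_iff[of k n x "(\<not> fst x, snd x)"] unfolding H_verts_def by (cases x) auto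
qed

lemma Mid_elem: "e \<in> Mid n \<Longrightarrow> \<exists>i. 1 \<le> i \<and> i \<le> n \<and> e = {(False,i),(True,i)}"
  unfolding Mid_def H_verts_def by (auto simp: insert_commute)

lemma Mid_lower:
  assumes nk: "2*k < n"
  shows "n - 1 \<le> forcing_number (H_verts n) (H_edges n k) (Mid n)"
proof -
  have pm: "perfect_matching (H_verts n) (H_edges n k) (Mid n)" using Mid_pm[OF nk] .
  have gd: "good (H_verts n) (H_edges n k)" using H_good[OF nk] .
  have cM: "card (Mid n) = n" using pm_card(1)[OF pm gd H_fin] H_card by simp
  have finM: "finite (Mid n)" using pm_card(2)[OF pm gd H_fin] .
  show ?thesis
  proof (rule fn_ge[OF pm_self_forcing[OF pm gd]])
    fix S assume S: "forcing_set (H_verts n) (H_edges n k) (Mid n) S"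
    then have SM: "S \<subseteq> Mid n" unfolding forcing_set_def by simp
    have "card (Mid n - S) \<le> Suc 0"
    proof (subst card_le_Suc0_iff_eq)
      show "finite (Mid n - S)" using finM by simp
      show "\<forall>a1\<in>Mid n - S. \<forall>a2\<in>Mid n - S. a1 = a2"
      proof (intro ballI, rule ccontr)
        fix e f assume ef: "e \<in> Mid n - S" "f \<in> Mid n - S" "e \<noteq> f"
        obtain i where i: "1 \<le> i" "i \<le> n" "e = {(False,i),(True,i)}" using Mid_elem ef(1) by blast
        obtain j where j: "1 \<le> j" "j \<le> n" "f = {(False,j),(True,j)}" using Mid_elem ef(2) by blast
        have ij: "i \<noteq> j" using ef(3) i j by auto
        have sub: "S \<subseteq> Mid n - {e,f}" using SM ef by auto
        show False
        proof (cases "grp k i = grp k j")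
          case True
          have "{(False,i),(False,j)} \<in> H_edges n k" "{(True,i),(True,j)} \<in> H_edges n k"
            using edge_iff[OF nk] ij True i j unfolding adj_def by auto
          then show False using switch[OF pm gd _ _ ef(3) i(3) j(3) _ _ sub S] ef by blast
        next
          case False
          have "{(False,i),(True,j)} \<in> H_edges n k" "{(True,i),(False,j)} \<in> H_edges n k"
            using edge_iff[OF nk] ij False i j unfolding adj_def by auto
          moreover have "f = {(True,j),(False,j)}" using j by auto
          ultimately show False using switch[OF pm gd _ _ ef(3) i(3) _ _ _ sub S] ef by blast
        qed
      qed
    qed
    moreover have "card (Mid n - S) = card (Mid n) - card S" using card_Diff_subset[OF finite_subset[OF SM finM] SM] .
    moreover have "card S \<le> card (Mid n)" using card_mono[OF finM SM] .
    ultimately show "n - 1 \<le> card S" using cM by linarith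
  qed
qed


definition pt :: "nat \<Rightarrow> nat" where "pt i = (if odd i then i+1 else i-1)"

lemma pt_props:
  assumes "1 \<le> i" "i \<le> 2*k"
  shows "1 \<le> pt i \<and> pt i \<le> 2*k \<and> pt (pt i) = i \<and> pt i \<noteq> i \<and> grp k (pt i) = grp k i"
proof (cases "odd i")
  case True
  then have "i+1 \<le> 2*k" using assms by presburger
  moreover have "(i + 1 + 1) div 2 = (i+1) div 2" using True by presburger
  ultimately show ?thesis using True assms unfolding pt_def grp_def by auto
next
  case False
  then have "2 \<le> i" using assms by presburger
  moreover have "(i - 1 + 1) div 2 = (i+1) div 2" using False calculation by presburger
  ultimately show ?thesis using False assms unfolding pt_def grp_def by auto
qed

definition sg :: "nat \<Rightarrow> bool \<times> nat \<Rightarrow> bool \<times> nat" where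
  "sg k x = (if snd x \<le> 2*k then (fst x, pt (snd x)) else (\<not> fst x, snd x))"

definition M0 :: "nat \<Rightarrow> nat \<Rightarrow> (bool \<times> nat) set set" where
  "M0 n k = (\<lambda>x. {x, sg k x}) ` H_verts n"

definition S0 :: "nat \<Rightarrow> nat \<Rightarrow> (bool \<times> nat) set set" where
  "S0 n k = (\<lambda>x. {x, sg k x}) ` {x \<in> H_verts n. fst x = False \<and> snd x \<noteq> 2*k+1}"

lemma sg_props:
  assumes nk: "2*k < n" and x: "x \<in> H_verts n"
  shows "sg k x \<in> H_verts n \<and> sg k x \<noteq> x \<and> sg k (sg k x) = x \<and> {x, sg k x} \<in> H_edges n k"
proof -
  obtain s i where si: "x = (s,i)" "1 \<le> i" "i \<le> n" using x unfolding H_verts_def by auto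
  show ?thesis
  proof (cases "i \<le> 2*k")
    case True
    note p = pt_props[OF si(2) True]
    have "adj n k (s,i) (s, pt i)" unfolding adj_def using p si nk by auto
    then show ?thesis using p si True nk edge_iff[OF nk, of "(s,i)" "(s,pt i)"] unfolding sg_def H_verts_def by auto
  next
    case False
    have "adj n k (s,i) (\<not>s, i)" unfolding adj_def using si by auto
    then show ?thesis using si False edge_iff[OF nk, of "(s,i)" "(\<not>s,i)"] unfolding sg_def H_verts_def by auto
  qed
qed

lemma M0_pm: "2*k < n \<Longrightarrow> perfect_matching (H_verts n) (H_edges n k) (M0 n k)"
  unfolding M0_def by (rule inv_pm) (rule sg_props)

lemma S0_card:
  assumes nk: "2*k < n"
  shows "card (S0 n k) \<le> n - k - 1"
proof -
  define X1 where "X1 = (\<lambda>t. (False, 2*t-1)) ` {1..k}"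
  define X2 where "X2 = (\<lambda>i. (False, i)) ` {2*k+2..n}"
  have sub: "S0 n k \<subseteq> (\<lambda>x. {x, sg k x}) ` (X1 \<union> X2)"
  proof
    fix e assume "e \<in> S0 n k"
    then obtain j where j: "e = {(False,j), sg k (False,j)}" "1 \<le> j" "j \<le> n" "j \<noteq> 2*k+1"
      unfolding S0_def H_verts_def by auto
    show "e \<in> (\<lambda>x. {x, sg k x}) ` (X1 \<union> X2)"
    proof (cases "j \<le> 2*k")
      case True
      note p = pt_props[OF j(2) True]
      show ?thesis
      proof (cases "odd j")
        case True
        have a: "j = 2*((j+1) div 2) - 1" using True by presburger
        have b: "(j+1) div 2 \<in> {1..k}" using j \<open>j \<le> 2*k\<close> by auto
        have "(False, j) \<in> X1" unfolding X1_def using a b by (intro image_eqI[of _ _ "(j+1) div 2"]) auto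
        then show ?thesis using j(1) by blast
      next
        case False
        then have pj: "pt j = j - 1" unfolding pt_def by simp
        have a: "j - 1 = 2*(j div 2) - 1" using False by presburger
        have b: "j div 2 \<in> {1..k}" using j \<open>j \<le> 2*k\<close> False by auto
        have "(False, j - 1) \<in> X1" unfolding X1_def using a b by (intro image_eqI[of _ _ "j div 2"]) auto
        moreover have "e = {(False, j-1), sg k (False, j-1)}"
          using j(1) p pj \<open>j \<le> 2*k\<close> unfolding sg_def by auto
        ultimately show ?thesis by blast
      qed
    next
      case False
      then have "(False, j) \<in> X2" unfolding X2_def using j by auto
      then show ?thesis using j(1) by blast
    qed
  qed
  have "card (S0 n k) \<le> card ((\<lambda>x. {x, sg k x}) ` (X1 \<union> X2))"
    using sub by (intro card_mono) (auto simp: X1_def X2_def)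
  also have "\<dots> \<le> card (X1 \<union> X2)" by (rule card_image_le) (auto simp: X1_def X2_def)
  also have "\<dots> \<le> card X1 + card X2" by (rule card_Un_le)
  also have "\<dots> \<le> k + (n - (2*k+1))"
  proof -
    have "card X1 \<le> k" unfolding X1_def using card_image_le[of "{1..k}"] by fastforce
    moreover have "card X2 \<le> n - (2*k+1)" unfolding X2_def using card_image_le[of "{2*k+2..n}"] by fastforce
    ultimately show ?thesis by simp
  qed
  finally show ?thesis using nk by linarith
qed


lemma S0_forcing:
  assumes nk: "2*k < n"
  shows "forcing_set (H_verts n) (H_edges n k) (M0 n k) (S0 n k)"
  unfolding forcing_set_def
proof (intro conjI allI impI)
  show "S0 n k \<subseteq> M0 n k" unfolding S0_def M0_def by auto
  fix M' assume M': "perfect_matching (H_verts n) (H_edges n k) M' \<and> S0 n k \<subseteq> M'"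
  then have pm': "perfect_matching (H_verts n) (H_edges n k) M'" and sub: "S0 n k \<subseteq> M'" by auto
  have gd: "good (H_verts n) (H_edges n k)" using H_good[OF nk] .
  have pm0: "perfect_matching (H_verts n) (H_edges n k) (M0 n k)" using M0_pm[OF nk] .
  have V: "(s,i) \<in> H_verts n \<longleftrightarrow> 1 \<le> i \<and> i \<le> n" for s i unfolding H_verts_def by auto
  have inS0: "{(False,j), sg k (False,j)} \<in> M'" if "1 \<le> j" "j \<le> n" "j \<noteq> 2*k+1" for j
  proof -
    have "(False,j) \<in> {x \<in> H_verts n. fst x = False \<and> snd x \<noteq> 2*k+1}" using that V by simp
    then have "{(False,j), sg k (False,j)} \<in> S0 n k" unfolding S0_def by (rule imageI)
    then show ?thesis using sub by (rule subsetD[rotated])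
  qed
  have Fcov: "g = {(False,j), sg k (False,j)}" if "g \<in> M'" "(False,j) \<in> g" "1 \<le> j" "j \<le> n" "j \<noteq> 2*k+1" for g j
  proof -
    have "(False,j) \<in> H_verts n" using V that(3,4) by simp
    moreover have "(False,j) \<in> {(False,j), sg k (False,j)}" by simp
    ultimately show ?thesis using pm_unique[OF pm' that(1) inS0[OF that(3-5)] that(2)] by blast
  qed
  have nbr: "\<exists>y. g = {x,y} \<and> x \<noteq> y \<and> adj n k x y" if gx: "g \<in> M'" "x \<in> g" for g x
  proof -
    obtain a b where ab: "g = {a,b}" "a \<noteq> b" "adj n k a b" using pm_adj[OF nk pm' gx(1)] by metis
    show ?thesis
    proof (cases "x = a")
      case True then show ?thesis using ab by blast
    next
      case False then have "x = b" using gx(2) ab(1) by blast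
      then show ?thesis using ab adj_sym[of n k a b] by (intro exI[of _ a]) auto
    qed
  qed
  define m where "m = 2*k+1"
  have m: "1 \<le> m" "m \<le> n" "\<not> m \<le> 2*k" using nk unfolding m_def by auto
  have estar: "{(False,m),(True,m)} \<in> M'"
  proof -
    obtain g where g: "g \<in> M'" "(True,m) \<in> g" using pm_cover[OF pm', of "(True,m)"] V m by metis
    obtain y where y: "g = {(True,m),y}" "(True,m) \<noteq> y" "adj n k (True,m) y" using nbr[OF g] by blast
    obtain s j where sj: "y = (s,j)" by (cases y) auto
    have jr: "1 \<le> j" "j \<le> n" using y(3) sj unfolding adj_def by auto
    have sF: "s = False"
    proof (rule ccontr)
      assume "s \<noteq> False"
      then have "s = True" by simp
      then have "j \<noteq> m" "grp k m = grp k j" using y(2,3) sj unfolding adj_def by auto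
      then show False using grp_eq_le[of k m j] m jr by auto
    qed
    have "j = m"
    proof (rule ccontr)
      assume "j \<noteq> m"
      then have "g = {(False,j), sg k (False,j)}" using Fcov[OF g(1) _ jr] y(1) sj sF unfolding m_def by auto
      then have "(True,m) \<in> {(False,j), sg k (False,j)}" using g(2) by simp
      then show False using \<open>j \<noteq> m\<close> unfolding sg_def by (auto split: if_splits)
    qed
    then show ?thesis using g(1) y(1) sj sF by (auto simp: insert_commute)
  qed
  have "M0 n k \<subseteq> M'"
  proof
    fix e assume "e \<in> M0 n k"
    then obtain s j where e: "e = {(s,j), sg k (s,j)}" "1 \<le> j" "j \<le> n" unfolding M0_def H_verts_def by auto
    show "e \<in> M'"
    proof (cases "j = m")
      case True
      then have "e = {(False,m),(True,m)}" using e m unfolding sg_def by (cases s) auto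
      then show ?thesis using estar by simp
    next
      case jm: False
      show ?thesis
      proof (cases s)
        case False
        then show ?thesis using inS0[OF e(2,3)] jm e(1) unfolding m_def by simp
      next
        case True
        show ?thesis
        proof (cases "j \<le> 2*k")
          case False
          then have "e = {(False,j), sg k (False,j)}" using e True unfolding sg_def by auto
          then show ?thesis using inS0[OF e(2,3)] jm unfolding m_def by simp
        next
          case jk: True
          note p = pt_props[OF e(2) jk]
          obtain g where g: "g \<in> M'" "(True,j) \<in> g" using pm_cover[OF pm', of "(True,j)"] V e by metis
          obtain y where y: "g = {(True,j),y}" "(True,j) \<noteq> y" "adj n k (True,j) y" using nbr[OF g] by blast
          obtain s' j' where sj: "y = (s',j')" by (cases y) auto
          have jr: "1 \<le> j'" "j' \<le> n" using y(3) sj unfolding adj_def by auto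
          have sT: "s' = True"
          proof (rule ccontr)
            assume "s' \<noteq> True"
            then have sF: "s' = False" by simp
            show False
            proof (cases "j' = m")
              case True
              have fm: "(False,m) \<in> g" using y(1) sj sF True by simp
              have fmV: "(False,m) \<in> H_verts n" using V m by simp
              have "g = {(False,m),(True,m)}"
                using pm_unique[OF pm' g(1) estar fm _ fmV] by simp
              then show False using g(2) jm by auto
            next
              case False
              then have "g = {(False,j'), sg k (False,j')}" using Fcov[OF g(1) _ jr] y(1) sj sF unfolding m_def by auto
              then have "(True,j) \<in> {(False,j'), sg k (False,j')}" using g(2) by simp
              then show False using jk unfolding sg_def by (auto split: if_splits)
            qed
          qed
          then have "j' \<noteq> j" "grp k j' = grp k j" using y(2,3) sj unfolding adj_def by auto
          then have jj: "j' = pt j"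
          proof -
            assume a: "j' \<noteq> j" "grp k j' = grp k j"
            show "j' = pt j"
            proof (rule ccontr)
              assume "j' \<noteq> pt j"
              then show False using grp_three[of k j j' "pt j"] a p e(2) jr(1) by metis
            qed
          qed
          have "sg k (s,j) = (True, pt j)" using True jk unfolding sg_def by simp
          then have "g = e" using y(1) sj sT e(1) True jj by simp
          then show ?thesis using g(1) by simp
        qed
      qed
    qed
  qed
  then show "M' = M0 n k" using pm_sub[OF pm0 pm' gd] by simp
qed


lemma fn_upper:
  assumes nk: "2*k < n" and pm: "perfect_matching (H_verts n) (H_edges n k) M"
  shows "forcing_number (H_verts n) (H_edges n k) M \<le> n - 1"
proof -
  have gd: "good (H_verts n) (H_edges n k)" using H_good[OF nk] .
  have cM: "card M = n" using pm_card(1)[OF pm gd H_fin] H_card by simp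
  have finM: "finite M" using pm_card(2)[OF pm gd H_fin] .
  have "M \<noteq> {}" using cM nk by auto
  then obtain e where e: "e \<in> M" by blast
  have "forcing_number (H_verts n) (H_edges n k) M \<le> card (M - {e})"
    by (rule fn_le[OF drop_one_forcing[OF pm gd e]])
  also have "\<dots> = n - 1" using cM e finM by simp
  finally show ?thesis .
qed

lemma pms_finite:
  assumes nk: "2*k < n"
  shows "finite {M. perfect_matching (H_verts n) (H_edges n k) M}"
proof -
  have gd: "good (H_verts n) (H_edges n k)" using H_good[OF nk] .
  have "H_edges n k \<subseteq> Pow (H_verts n)"
  proof
    fix e assume "e \<in> H_edges n k"
    then obtain x y where "e = {x,y}" "x \<in> H_verts n" "y \<in> H_verts n" using gd unfolding good_def by metis
    then show "e \<in> Pow (H_verts n)" by simp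
  qed
  then have "finite (H_edges n k)" using H_fin by (meson finite_Pow_iff finite_subset)
  then have "finite (Pow (H_edges n k))" by simp
  moreover have "{M. perfect_matching (H_verts n) (H_edges n k) M} \<subseteq> Pow (H_edges n k)"
    unfolding perfect_matching_def by auto
  ultimately show ?thesis by (rule finite_subset[rotated])
qed

theorem lemma5p6:
  fixes n k :: nat
  assumes "1 \<le> n" and "k \<le> (n - 1) div 2"
  shows "min_forcing_number (H_verts n) (H_edges n k) = n - k - 1
    \<and> (k = (n - 1) div 2 \<longrightarrow>
         min_forcing_number (H_verts n) (H_edges n k) = n div 2
       \<and> max_forcing_number (H_verts n) (H_edges n k) = n - 1)"
proof -
  have nk: "2*k < n" using assms by linarith
  define Fs where "Fs = {forcing_number (H_verts n) (H_edges n k) M | M. perfect_matching (H_verts n) (H_edges n k) M}"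
  have Fs_img: "Fs = (\<lambda>M. forcing_number (H_verts n) (H_edges n k) M) ` {M. perfect_matching (H_verts n) (H_edges n k) M}"
    unfolding Fs_def by (rule setcompr_eq_image)
  have finFs: "finite Fs" unfolding Fs_img using pms_finite[OF nk] by simp
  have pm0: "perfect_matching (H_verts n) (H_edges n k) (M0 n k)" using M0_pm[OF nk] .
  have f0: "forcing_number (H_verts n) (H_edges n k) (M0 n k) = n - k - 1"
    using fn_le[OF S0_forcing[OF nk]] S0_card[OF nk] fn_lower[OF nk pm0] by linarith
  have min: "min_forcing_number (H_verts n) (H_edges n k) = n - k - 1"
    unfolding min_forcing_number_def Fs_def[symmetric]
  proof (rule Min_eqI[OF finFs])
    show "n - k - 1 \<in> Fs" unfolding Fs_img using pm0 f0[symmetric] by (intro image_eqI[of _ _ "M0 n k"]) simp_all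
    fix y assume "y \<in> Fs"
    then obtain M where "y = forcing_number (H_verts n) (H_edges n k) M" "perfect_matching (H_verts n) (H_edges n k) M"
      unfolding Fs_img by blast
    then show "n - k - 1 \<le> y" using fn_lower[OF nk] by simp
  qed
  have pmid: "perfect_matching (H_verts n) (H_edges n k) (Mid n)" using Mid_pm[OF nk] .
  have fid: "forcing_number (H_verts n) (H_edges n k) (Mid n) = n - 1"
    using Mid_lower[OF nk] fn_upper[OF nk pmid] by linarith
  have max: "max_forcing_number (H_verts n) (H_edges n k) = n - 1"
    unfolding max_forcing_number_def Fs_def[symmetric]
  proof (rule Max_eqI[OF finFs])
    show "n - 1 \<in> Fs" unfolding Fs_img using pmid fid[symmetric] by (intro image_eqI[of _ _ "Mid n"]) simp_all
    fix y assume "y \<in> Fs"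
    then obtain M where "y = forcing_number (H_verts n) (H_edges n k) M" "perfect_matching (H_verts n) (H_edges n k) M"
      unfolding Fs_img by blast
    then show "y \<le> n - 1" using fn_upper[OF nk] by simp
  qed
  have a: "k = (n - 1) div 2 \<longrightarrow> n - k - 1 = n div 2" using assms(1) by presburger
  show ?thesis
  proof (intro conjI impI)
    show "min_forcing_number (H_verts n) (H_edges n k) = n - k - 1" by (rule min)
    assume "k = (n - 1) div 2"
    then have "n - k - 1 = n div 2" using a by blast
    then show "min_forcing_number (H_verts n) (H_edges n k) = n div 2" using min by simp
    show "max_forcing_number (H_verts n) (H_edges n k) = n - 1" by (rule max)
  qed
qed

end
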